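(* Let $A$ be a random variable with $\mathbb P(A>0)=1$, law $\rho$, and $\mathbb E\log A<0$, and let $\mu$ be a solution of equation (2) for $\rho$. Let $h:(0,\infty)\to[0,\infty)$ be the right-continuous non-increasing function determined by $$\int_0^\infty \mathbf 1_B(h(u))\,h(u)\,du=\rho(B)\quad\text{for every Borel }B\subset(0,\infty)$$ (equivalently, $\mathrm{Leb}\{u>0:h(u)\ge z\}=\int_{[z,\infty)}y^{-1}\rho(dy)$ for every $z>0$). Then $\int_0^\infty h(z)\,dz=1$, $\int_0^\infty h(z)\log h(z)\,dz<0$, and $\mu$ is a fixed point of the Poisson shot noise transform $\mathbb T_{h,1}$.
   Context: For a probability measure $\nu$ on $[0,\infty)$ with mean $m\in(0,\infty)$, its size-biased distribution is $\nu_{sb}(dx)=m^{-1}x\,\nu(dx)$. A probability measure $\mu$ on $[0,\infty)$ with mean in $(0,\infty)$ is a solution of equation (2) for $\rho$ if $\eta_{sb}\overset{d}{=}A\eta_{sb}+\eta$, where $\eta\sim\mu$, $\eta_{sb}\sim\mu_{sb}$ and $A\sim\rho$ are mutually independent. Poisson shot noise transform: fix $\lambda\in(0,\infty)$ and a Borel function $h:(0,\infty)\to[0,\infty)$. Let $\tau_1<\tau_2<\dots$ be the points of a homogeneous Poisson process on $(0,\infty)$ with intensity $\lambda$, independent of i.i.d. nonnegative random variables $\xi,\xi_1,\xi_2,\dots$. The domain is $\mathcal P_h^+=\{\nu:\nu\text{ a probability measure on }[0,\infty),\ \int_0^\infty\int_0^\infty(1\wedge h(s)y)\,ds\,\nu(dy)<\infty\}$;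 for $\mathcal L(\xi)\in\mathcal P_h^+$ the series $\sum_i\xi_ih(\tau_i)$ converges a.s., and $\mathbb T_{h,\lambda}(\mathcal L(\xi)):=\mathcal L(\sum_{i\ge1}\xi_ih(\tau_i))$. A fixed point of $\mathbb T_{h,\lambda}$ is a probability measure $\mu^*\in\mathcal P_h^+$, $\mu^*\neq\delta_0$, with $\mathbb T_{h,\lambda}\mu^*=\mu^*$; equivalently its Laplace–Stieltjes transform $\varphi(s)=\int_0^\infty e^{-sx}\mu^*(dx)$ satisfies $\varphi(s)=\exp\big(\lambda\int_0^\infty(\varphi(sh(u))-1)\,du\big)$ for all $s\ge0$. *)

theory Defs
  imports "HOL-Probability.Probability"
begin

definition prob_on_nonneg :: "real measure \<Rightarrow> bool" where
  "prob_on_nonneg \<nu> \<longleftrightarrow> prob_space \<nu> \<and> sets \<nu> = sets borel \<and> (AE x in \<nu>. 0 \<le> x)"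

definition has_pos_finite_mean :: "real measure \<Rightarrow> bool" where
  "has_pos_finite_mean \<nu> \<longleftrightarrow> integrable \<nu> (\<lambda>x. x) \<and> 0 < (\<integral>x. x \<partial>\<nu>)"

definition size_biased :: "real measure \<Rightarrow> real measure" where
  "size_biased \<nu> = density \<nu> (\<lambda>x. ennreal (x / (\<integral>y. y \<partial>\<nu>)))"

text \<open>mu solves equation (2) for rho: eta_sb =d A eta_sb + eta with A, eta_sb, eta independent
  (independence encoded by the product measure).\<close>
definition solves_eq2 :: "real measure \<Rightarrow> real measure \<Rightarrow> bool" where
  "solves_eq2 \<rho> \<mu> \<longleftrightarrow> prob_on_nonneg \<mu> \<and> has_pos_finite_mean \<mu> \<and>
     distr (\<rho> \<Otimes>\<^sub>M (size_biased \<mu> \<Otimes>\<^sub>M \<mu>)) borel (\<lambda>(a, y, x). a * y + x)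
       = size_biased \<mu>"

definition laplace_st :: "real measure \<Rightarrow> real \<Rightarrow> real" where
  "laplace_st \<nu> s = (\<integral>x. exp (- s * x) \<partial>\<nu>)"

definition in_Ph_plus :: "(real \<Rightarrow> real) \<Rightarrow> real measure \<Rightarrow> bool" where
  "in_Ph_plus h \<nu> \<longleftrightarrow> prob_on_nonneg \<nu> \<and>
     (\<integral>\<^sup>+ y. (\<integral>\<^sup>+ s. ennreal (min 1 (h s * y)) * indicator {0<..} s \<partial>lborel) \<partial>\<nu>) < \<infinity>"

text \<open>Fixed point of T_{h,lambda}, via the Laplace--Stieltjes characterization
  phi(s) = exp(lambda * int_0^infty (phi(s h(u)) - 1) du) for all s >= 0.\<close>
definition shot_noise_fixed_point :: "(real \<Rightarrow> real) \<Rightarrow> real \<Rightarrow> real measure \<Rightarrow> bool" where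
  "shot_noise_fixed_point h lam \<mu> \<longleftrightarrow> in_Ph_plus h \<mu> \<and> \<mu> \<noteq> return borel 0 \<and>
     (\<forall>s\<ge>0. set_integrable lborel {0<..} (\<lambda>u. laplace_st \<mu> (s * h u) - 1) \<and>
        laplace_st \<mu> s = exp (lam * (\<integral>u\<in>{0<..}. (laplace_st \<mu> (s * h u) - 1) \<partial>lborel)))"

end

theory Submission
  imports Defs
begin


lemma h_meas:
  fixes h :: "real \<Rightarrow> real"
  assumes "\<And>u v. 0<u \<Longrightarrow> u\<le>v \<Longrightarrow> h v \<le> h u"
  shows "(\<lambda>u. if 0<u then h u else 0) \<in> borel_measurable borel"
proof -
  have "mono_on {0<..} (\<lambda>u. - h u)" using assms by (auto simp: mono_on_def)
  then have "(\<lambda>u. - h u) \<in> borel_measurable (restrict_space borel {0<..})"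
    by (rule borel_measurable_mono_on_fnc)
  then have "(\<lambda>u. - (- h u)) \<in> borel_measurable (restrict_space borel {0<..})"
    by measurable
  then have "(\<lambda>u. h u) \<in> borel_measurable (restrict_space borel {0<..})" by simp
  then have "(\<lambda>x. indicator {0<..} x *\<^sub>R h x) \<in> borel_measurable borel"
    by (subst (asm) borel_measurable_restrict_space_iff) auto
  moreover have "(\<lambda>x. indicator {0<..} x *\<^sub>R h x) = (\<lambda>u. if 0<u then h u else 0)"
    by (auto simp: indicator_def)
  ultimately show ?thesis by simp
qed



lemma push:
  fixes \<rho> :: "real measure" and h :: "real \<Rightarrow> real" and f :: "real \<Rightarrow> ennreal"
  assumes rho_sets: "sets \<rho> = sets borel"
    and A_pos: "AE a in \<rho>. 0 < a"
    and h_nonneg: "\<And>u. 0 < u \<Longrightarrow> 0 \<le> h u"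
    and h_mono: "\<And>u v. 0 < u \<Longrightarrow> u \<le> v \<Longrightarrow> h v \<le> h u"
    and h_rho: "\<And>B. B \<in> sets borel \<Longrightarrow> B \<subseteq> {0<..} \<Longrightarrow>
        (\<integral>\<^sup>+ u. ennreal (indicator B (h u) * h u) * indicator {0<..} u \<partial>lborel) = emeasure \<rho> B"
    and f: "f \<in> borel_measurable borel"
  shows "(\<integral>\<^sup>+u. f (h u) * ennreal (h u) * indicator {0<..} u \<partial>lborel) = (\<integral>\<^sup>+a. f a \<partial>\<rho>)"
proof -
  define h' where "h' = (\<lambda>u. if 0<u then h u else 0)"
  have hm[measurable]: "h' \<in> borel_measurable borel" unfolding h'_def by (rule h_meas[OF h_mono])
  define N where "N = density lborel (\<lambda>u. ennreal (h' u))"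
  define D where "D = distr N borel h'"
  have sN: "sets N = sets borel" "space N = UNIV" unfolding N_def by auto
  have hmN[measurable]: "h' \<in> measurable N borel" using hm by (simp add: measurable_cong_sets[OF sN(1) refl])
  have sD: "sets D = sets borel" unfolding D_def by simp
  have intD: "(\<integral>\<^sup>+x. g x \<partial>D) = (\<integral>\<^sup>+u. ennreal (h' u) * g (h' u) \<partial>lborel)"
    if g[measurable]: "g \<in> borel_measurable borel" for g :: "real \<Rightarrow> ennreal"
  proof -
    have "(\<integral>\<^sup>+x. g x \<partial>D) = (\<integral>\<^sup>+u. g (h' u) \<partial>N)"
      unfolding D_def by (rule nn_integral_distr) (auto)
    also have "\<dots> = (\<integral>\<^sup>+u. ennreal (h' u) * g (h' u) \<partial>lborel)"
      unfolding N_def by (rule nn_integral_density) auto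
    finally show ?thesis .
  qed
  let ?P = "{0<..} :: real set"
  have eqB: "emeasure D (?P \<inter> X) = emeasure \<rho> (?P \<inter> X)" if X: "X \<in> sets borel" for X
  proof -
    have "emeasure D (?P \<inter> X) = (\<integral>\<^sup>+x. indicator (?P \<inter> X) x \<partial>D)"
      using X by (subst nn_integral_indicator) (auto simp: sD)
    also have "\<dots> = (\<integral>\<^sup>+u. ennreal (h' u) * indicator (?P \<inter> X) (h' u) \<partial>lborel)"
      using X by (intro intD) auto
    also have "\<dots> = (\<integral>\<^sup>+ u. ennreal (indicator (?P \<inter> X) (h u) * h u) * indicator {0<..} u \<partial>lborel)"
      by (intro nn_integral_cong) (auto simp: h'_def indicator_def)
    also have "\<dots> = emeasure \<rho> (?P \<inter> X)"
      using X by (intro h_rho) auto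
    finally show ?thesis .
  qed
  have dens: "density \<rho> (indicator ?P) = density D (indicator ?P)"
  proof (rule measure_eqI)
    show "sets (density \<rho> (indicator ?P)) = sets (density D (indicator ?P))" using rho_sets sD by simp
    fix X assume "X \<in> sets (density \<rho> (indicator ?P))"
    then have X: "X \<in> sets borel" using rho_sets by simp
    show "emeasure (density \<rho> (indicator ?P)) X = emeasure (density D (indicator ?P)) X"
      using X eqB[OF X] rho_sets sD by (simp add: emeasure_restricted)
  qed
  have "(\<integral>\<^sup>+a. f a \<partial>\<rho>) = (\<integral>\<^sup>+a. indicator ?P a * f a \<partial>\<rho>)"
    using A_pos by (intro nn_integral_cong_AE) (auto simp: indicator_def)
  also have "\<dots> = (\<integral>\<^sup>+a. f a \<partial>density \<rho> (indicator ?P))"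
    by (rule nn_integral_density[symmetric]) (use rho_sets f in \<open>auto simp: measurable_cong_sets[OF rho_sets refl]\<close>)
  also have "\<dots> = (\<integral>\<^sup>+a. f a \<partial>density D (indicator ?P))" by (simp add: dens)
  also have "\<dots> = (\<integral>\<^sup>+a. indicator ?P a * f a \<partial>D)"
    by (rule nn_integral_density) (use sD f in \<open>auto simp: measurable_cong_sets[OF sD refl]\<close>)
  also have "\<dots> = (\<integral>\<^sup>+u. ennreal (h' u) * (indicator ?P (h' u) * f (h' u)) \<partial>lborel)"
    using f by (intro intD) auto
  also have "\<dots> = (\<integral>\<^sup>+u. f (h u) * ennreal (h u) * indicator {0<..} u \<partial>lborel)"
  proof (intro nn_integral_cong)
    fix u :: real
    show "ennreal (h' u) * (indicator ?P (h' u) * f (h' u)) = f (h u) * ennreal (h u) * indicator {0<..} u"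
    proof (cases "0 < u")
      case True
      then show ?thesis using h_nonneg[OF True]
        by (cases "h u = 0") (auto simp: h'_def indicator_def mult.commute)
    qed (auto simp: h'_def)
  qed
  finally show ?thesis ..
qed



definition psi :: "real measure \<Rightarrow> real \<Rightarrow> real" where
  "psi \<mu> s = (\<integral>x. x * exp (- s * x) \<partial>\<mu>)"

locale lapl =
  fixes \<mu> :: "real measure"
  assumes mu_prob: "prob_space \<mu>" and mu_sets: "sets \<mu> = sets borel"
    and mu_nn: "AE x in \<mu>. 0 \<le> x" and mu_int: "integrable \<mu> (\<lambda>x. x)"
begin

interpretation P: prob_space \<mu> by (rule mu_prob)

lemma meas_cong: "measurable \<mu> N = measurable borel N"
  by (rule measurable_cong_sets[OF mu_sets refl])

lemma int_exp: "0 \<le> s \<Longrightarrow> integrable \<mu> (\<lambda>x. exp (- s * x))"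
  apply (rule Bochner_Integration.integrable_bound[where f="\<lambda>_. 1::real"])
  apply simp
  apply (simp add: meas_cong)
  using mu_nn by eventually_elim (auto simp: mult_nonneg_nonneg)

lemma int_xexp: "0 \<le> s \<Longrightarrow> integrable \<mu> (\<lambda>x. x * exp (- s * x))"
  apply (rule Bochner_Integration.integrable_bound[where f="\<lambda>x. x"])
  apply (rule mu_int)
  apply (simp add: meas_cong)
  using mu_nn proof eventually_elim
  fix x :: real assume "0 \<le> s" "0 \<le> x"
  then have "exp (- s * x) \<le> 1" by (simp add: mult_nonneg_nonneg)
  then show "norm (x * exp (- s * x)) \<le> norm x" using \<open>0 \<le> x\<close>
    by (simp add: abs_mult mult_left_le)
qed

lemma phi0: "laplace_st \<mu> 0 = 1"
  unfolding laplace_st_def by (simp add: P.prob_space)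

lemma phi_le1: "0 \<le> s \<Longrightarrow> laplace_st \<mu> s \<le> 1"
proof -
  assume s: "0 \<le> s"
  have "laplace_st \<mu> s \<le> (\<integral>x. 1 \<partial>\<mu>)"
    unfolding laplace_st_def
    apply (rule integral_mono_AE[OF int_exp[OF s]])
    apply simp
    using mu_nn by eventually_elim (use s in \<open>auto simp: mult_nonneg_nonneg\<close>)
  then show ?thesis by (simp add: P.prob_space)
qed

lemma phi_pos: "0 \<le> s \<Longrightarrow> 0 < laplace_st \<mu> s"
proof -
  assume s: "0 \<le> s"
  have ge: "0 \<le> laplace_st \<mu> s" unfolding laplace_st_def by (rule integral_nonneg_AE) auto
  moreover have "laplace_st \<mu> s \<noteq> 0"
  proof
    assume "laplace_st \<mu> s = 0"
    then have "AE x in \<mu>. exp (- s * x) = 0"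
      unfolding laplace_st_def
      by (subst (asm) integral_nonneg_eq_0_iff_AE) (use int_exp[OF s] in auto)
    then have "AE x in \<mu>. False" by simp
    then show False by simp
  qed
  ultimately show ?thesis by simp
qed

lemma psi_nn: "0 \<le> s \<Longrightarrow> 0 \<le> psi \<mu> s"
  unfolding psi_def apply (rule integral_nonneg_AE)
  using mu_nn by eventually_elim auto

lemma psi_nn_integral: "0 \<le> s \<Longrightarrow> (\<integral>\<^sup>+x. ennreal (x * exp (- s * x)) \<partial>\<mu>) = ennreal (psi \<mu> s)"
  unfolding psi_def
  apply (rule nn_integral_eq_integral[OF int_xexp])
  apply assumption
  using mu_nn by eventually_elim auto

lemma psi_cont: "continuous_on {0..} (psi \<mu>)"
proof (rule continuous_on_sequentiallyI)
  fix u :: "nat \<Rightarrow> real" and a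
  assume u: "\<forall>n. u n \<in> {0..}" and a: "a \<in> {0..}" and lim: "u \<longlonglongrightarrow> a"
  show "(\<lambda>n. psi \<mu> (u n)) \<longlonglongrightarrow> psi \<mu> a"
    unfolding psi_def
  proof (rule integral_dominated_convergence[where w="\<lambda>x. x"])
    show "(\<lambda>x. x * exp (- a * x)) \<in> borel_measurable \<mu>" by (simp add: meas_cong)
    show "\<And>i. (\<lambda>x. x * exp (- u i * x)) \<in> borel_measurable \<mu>" by (simp add: meas_cong)
    show "integrable \<mu> (\<lambda>x. x)" by (rule mu_int)
    show "AE x in \<mu>. (\<lambda>i. x * exp (- u i * x)) \<longlonglongrightarrow> x * exp (- a * x)"
      by (intro AE_I2 tendsto_intros lim)
    fix i
    show "AE x in \<mu>. norm (x * exp (- u i * x)) \<le> x"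
      using mu_nn proof eventually_elim
      fix x :: real assume x: "0 \<le> x"
      have "exp (- u i * x) \<le> 1" using u x by (auto simp: mult_nonneg_nonneg)
      then show "norm (x * exp (- u i * x)) \<le> x" using x
        by (simp add: abs_mult mult_left_le)
    qed
  qed
qed

end


lemma inner_ftc:
  fixes c x s :: real
  assumes c: "0 < c" and x: "0 \<le> x" and s: "0 \<le> s"
  shows "(\<integral>\<^sup>+t. ennreal (x * exp (- (t*c) * x)) * indicator {0..s} t \<partial>lborel) = ennreal ((1 - exp (- (s*c) * x)) / c)"
proof -
  let ?F = "\<lambda>t. - exp (- (t*c) * x) / c"
  have "((\<lambda>t. x * exp (- (t*c) * x)) has_integral (?F s - ?F 0)) {0..s}"
  proof (rule fundamental_theorem_of_calculus[OF s])
    fix t :: real assume "t \<in> {0..s}"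
    have "(?F has_real_derivative x * exp (- (t*c) * x)) (at t)"
      using c by (auto intro!: derivative_eq_intros simp: field_simps)
    then show "(?F has_vector_derivative x * exp (- (t*c) * x)) (at t within {0..s})"
      by (simp add: has_real_derivative_iff_has_vector_derivative has_vector_derivative_at_within)
  qed
  then have "(\<integral>\<^sup>+t. ennreal (x * exp (- (t*c) * x)) * indicator {0..s} t \<partial>lborel) = ennreal (?F s - ?F 0)"
    by (rule nn_integral_has_integral_lebesgue'[rotated]) (use x in auto)
  also have "?F s - ?F 0 = (1 - exp (- (s*c) * x)) / c" using c by (simp add: diff_divide_distrib)
  finally show ?thesis .
qed

context lapl begin

interpretation P: prob_space \<mu> by (rule mu_prob)

interpretation Q: pair_sigma_finite \<mu> lborel
  by (simp add: pair_sigma_finite_def P.sigma_finite_measure_axioms lborel.sigma_finite_measure_axioms)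

lemma E2:
  assumes c: "0 < c" and s: "0 \<le> s"
  shows "ennreal ((1 - laplace_st \<mu> (s*c)) / c) = (\<integral>\<^sup>+t. ennreal (psi \<mu> (t*c)) * indicator {0..s} t \<partial>lborel)"
proof -
  have sp: "sets (\<mu> \<Otimes>\<^sub>M lborel) = sets (borel \<Otimes>\<^sub>M borel)"
    by (rule sets_pair_measure_cong) (auto simp: mu_sets)
  have "(\<integral>\<^sup>+t. ennreal (psi \<mu> (t*c)) * indicator {0..s} t \<partial>lborel)
      = (\<integral>\<^sup>+t. (\<integral>\<^sup>+x. ennreal (x * exp (- (t*c) * x)) * indicator {0..s} t \<partial>\<mu>) \<partial>lborel)"
  proof (intro nn_integral_cong)
    fix t :: real
    show "ennreal (psi \<mu> (t*c)) * indicator {0..s} t = (\<integral>\<^sup>+x. ennreal (x * exp (- (t*c) * x)) * indicator {0..s} t \<partial>\<mu>)"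
    proof (cases "t \<in> {0..s}")
      case True
      then have "0 \<le> t*c" using c by auto
      then show ?thesis using True psi_nn_integral[of "t*c"] by (simp add: nn_integral_multc)
    qed simp
  qed
  also have "\<dots> = (\<integral>\<^sup>+x. (\<integral>\<^sup>+t. ennreal (x * exp (- (t*c) * x)) * indicator {0..s} t \<partial>lborel) \<partial>\<mu>)"
    by (rule Q.Fubini') (simp add: measurable_cong_sets[OF sp refl])
  also have "\<dots> = (\<integral>\<^sup>+x. ennreal ((1 - exp (- (s*c) * x)) / c) \<partial>\<mu>)"
    apply (rule nn_integral_cong_AE)
    using mu_nn by eventually_elim (rule inner_ftc[OF c _ s])
  also have "\<dots> = ennreal (\<integral>x. (1 - exp (- (s*c) * x)) / c \<partial>\<mu>)"
  proof (rule nn_integral_eq_integral)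
    have "0 \<le> s*c" using c s by simp
    then show "integrable \<mu> (\<lambda>x. (1 - exp (- (s*c) * x)) / c)"
      using int_exp by auto
    show "AE x in \<mu>. 0 \<le> (1 - exp (- (s*c) * x)) / c"
      using mu_nn proof eventually_elim
      fix x :: real assume "0 \<le> x"
      then have "exp (- (s*c) * x) \<le> 1" using c s by (simp add: mult_nonneg_nonneg)
      then show "0 \<le> (1 - exp (- (s*c) * x)) / c" using c by simp
    qed
  qed
  also have "(\<integral>x. (1 - exp (- (s*c) * x)) / c \<partial>\<mu>) = (1 - laplace_st \<mu> (s*c)) / c"
  proof -
    have "0 \<le> s*c" using c s by simp
    then show ?thesis unfolding laplace_st_def
      using int_exp[of "s*c"] by (simp add: P.prob_space)
  qed
  finally show ?thesis ..
qed

end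


context lapl begin

interpretation P: prob_space \<mu> by (rule mu_prob)

lemma phi_nn_integral: "0 \<le> s \<Longrightarrow> (\<integral>\<^sup>+x. ennreal (exp (- s * x)) \<partial>\<mu>) = ennreal (laplace_st \<mu> s)"
  unfolding laplace_st_def
  by (rule nn_integral_eq_integral[OF int_exp]) auto

lemma psi_meas[measurable]: "psi \<mu> \<in> borel_measurable borel"
proof -
  have sp: "sets (borel \<Otimes>\<^sub>M \<mu>) = sets (borel \<Otimes>\<^sub>M borel)"
    by (rule sets_pair_measure_cong) (auto simp: mu_sets)
  have "(\<lambda>s. \<integral>x. x * exp (- s * x) \<partial>\<mu>) \<in> borel_measurable borel"
    by (rule P.borel_measurable_lebesgue_integral) (simp add: measurable_cong_sets[OF sp refl])
  then show ?thesis unfolding psi_def[abs_def] .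
qed

lemma phi_meas[measurable]: "laplace_st \<mu> \<in> borel_measurable borel"
proof -
  have sp: "sets (borel \<Otimes>\<^sub>M \<mu>) = sets (borel \<Otimes>\<^sub>M borel)"
    by (rule sets_pair_measure_cong) (auto simp: mu_sets)
  have "(\<lambda>s. \<integral>x. exp (- s * x) \<partial>\<mu>) \<in> borel_measurable borel"
    by (rule P.borel_measurable_lebesgue_integral) (simp add: measurable_cong_sets[OF sp refl])
  then show ?thesis unfolding laplace_st_def[abs_def] .
qed

lemma E1:
  fixes \<rho> :: "real measure"
  assumes rho_prob: "prob_space \<rho>" and rho_sets: "sets \<rho> = sets borel"
    and A_pos: "AE a in \<rho>. 0 < a"
    and eq: "distr (\<rho> \<Otimes>\<^sub>M (size_biased \<mu> \<Otimes>\<^sub>M \<mu>)) borel (\<lambda>(a, y, x). a * y + x) = size_biased \<mu>"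
    and m: "0 < (\<integral>x. x \<partial>\<mu>)"
    and s: "0 \<le> s"
  shows "ennreal (psi \<mu> s) = ennreal (laplace_st \<mu> s) * (\<integral>\<^sup>+a. ennreal (psi \<mu> (s*a)) \<partial>\<rho>)"
proof -
  define m where "m = (\<integral>x. x \<partial>\<mu>)"
  have m0: "0 < m" using m by (simp add: m_def)
  define sb where "sb = size_biased \<mu>"
  have sb_def': "sb = density \<mu> (\<lambda>x. ennreal (x / m))" unfolding sb_def size_biased_def m_def ..
  have sbsets: "sets sb = sets borel" unfolding sb_def' by (simp add: mu_sets)
  have sbint: "(\<integral>\<^sup>+y. ennreal (exp (- c * y)) \<partial>sb) = ennreal (psi \<mu> c) * ennreal (1/m)"
    if c: "0 \<le> c" for c
  proof -
    have "(\<integral>\<^sup>+y. ennreal (exp (- c * y)) \<partial>sb) = (\<integral>\<^sup>+y. ennreal (y/m) * ennreal (exp (- c * y)) \<partial>\<mu>)"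
      unfolding sb_def' by (rule nn_integral_density) (auto simp: meas_cong)
    also have "\<dots> = (\<integral>\<^sup>+y. ennreal (y * exp (- c * y)) * ennreal (1/m) \<partial>\<mu>)"
      apply (rule nn_integral_cong_AE)
      using mu_nn proof eventually_elim
      fix y :: real assume "0 \<le> y"
      then show "ennreal (y/m) * ennreal (exp (- c * y)) = ennreal (y * exp (- c * y)) * ennreal (1/m)"
        using m0 by (simp add: ennreal_mult[symmetric] mult_nonneg_nonneg)
    qed
    also have "\<dots> = (\<integral>\<^sup>+y. ennreal (y * exp (- c * y)) \<partial>\<mu>) * ennreal (1/m)"
      by (rule nn_integral_multc) (auto simp: meas_cong)
    also have "\<dots> = ennreal (psi \<mu> c) * ennreal (1/m)"
      using psi_nn_integral[OF c] by simp
    finally show ?thesis .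
  qed
  have sbprob: "prob_space sb"
  proof (rule prob_spaceI)
    have "emeasure sb (space sb) = (\<integral>\<^sup>+y. ennreal (exp (- 0 * y)) \<partial>sb)"
      by (simp add: sbsets)
    also have "\<dots> = ennreal (psi \<mu> 0) * ennreal (1/m)" by (rule sbint) simp
    also have "psi \<mu> 0 = m" unfolding psi_def m_def by simp
    finally show "emeasure sb (space sb) = 1" using m0 by (simp add: ennreal_mult[symmetric])
  qed
  interpret SB: prob_space sb by (rule sbprob)
  interpret R: prob_space \<rho> by (rule rho_prob)
  interpret SM: pair_prob_space sb \<mu> by (simp add: pair_prob_space_def sbprob mu_prob pair_sigma_finite_def SB.sigma_finite_measure_axioms P.sigma_finite_measure_axioms)

  have sp: "sets (\<rho> \<Otimes>\<^sub>M (sb \<Otimes>\<^sub>M \<mu>)) = sets (borel \<Otimes>\<^sub>M (borel \<Otimes>\<^sub>M borel))"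
    by (intro sets_pair_measure_cong) (auto simp: rho_sets sbsets mu_sets)
  have sp2: "sets (sb \<Otimes>\<^sub>M \<mu>) = sets (borel \<Otimes>\<^sub>M borel)"
    by (intro sets_pair_measure_cong) (auto simp: sbsets mu_sets)
  have "(\<integral>\<^sup>+z. ennreal (exp (- s * z)) \<partial>sb) = (\<integral>\<^sup>+z. ennreal (exp (- s * z)) \<partial>distr (\<rho> \<Otimes>\<^sub>M (sb \<Otimes>\<^sub>M \<mu>)) borel (\<lambda>(a, y, x). a * y + x))"
    using eq by (simp add: sb_def)
  also have "\<dots> = (\<integral>\<^sup>+w. ennreal (exp (- s * (case w of (a, y, x) \<Rightarrow> a * y + x))) \<partial>(\<rho> \<Otimes>\<^sub>M (sb \<Otimes>\<^sub>M \<mu>)))"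
    by (rule nn_integral_distr) (auto simp: measurable_cong_sets[OF sp refl])
  also have "\<dots> = (\<integral>\<^sup>+a. (\<integral>\<^sup>+w. ennreal (exp (- s * (case (a, w) of (a, y, x) \<Rightarrow> a * y + x))) \<partial>(sb \<Otimes>\<^sub>M \<mu>)) \<partial>\<rho>)"
    by (rule sigma_finite_measure.nn_integral_fst[OF prob_space_imp_sigma_finite[OF SM.prob_space_axioms], symmetric]) (auto simp: measurable_cong_sets[OF sp refl])
  also have "\<dots> = (\<integral>\<^sup>+a. (\<integral>\<^sup>+y. (\<integral>\<^sup>+x. ennreal (exp (- (s*a) * y)) * ennreal (exp (- s * x)) \<partial>\<mu>) \<partial>sb) \<partial>\<rho>)"
  proof (intro nn_integral_cong)
    fix a :: real
    have "(\<integral>\<^sup>+w. ennreal (exp (- s * (case (a, w) of (a, y, x) \<Rightarrow> a * y + x))) \<partial>(sb \<Otimes>\<^sub>M \<mu>))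
        = (\<integral>\<^sup>+y. (\<integral>\<^sup>+x. ennreal (exp (- s * (case (a, y, x) of (a, y, x) \<Rightarrow> a * y + x))) \<partial>\<mu>) \<partial>sb)"
      by (rule P.nn_integral_fst[symmetric]) (auto simp: measurable_cong_sets[OF sp2 refl])
    also have "\<dots> = (\<integral>\<^sup>+y. (\<integral>\<^sup>+x. ennreal (exp (- (s*a) * y)) * ennreal (exp (- s * x)) \<partial>\<mu>) \<partial>sb)"
      by (intro nn_integral_cong) (simp add: ennreal_mult[symmetric] exp_add[symmetric] algebra_simps)
    finally show "(\<integral>\<^sup>+w. ennreal (exp (- s * (case (a, w) of (a, y, x) \<Rightarrow> a * y + x))) \<partial>(sb \<Otimes>\<^sub>M \<mu>))
        = (\<integral>\<^sup>+y. (\<integral>\<^sup>+x. ennreal (exp (- (s*a) * y)) * ennreal (exp (- s * x)) \<partial>\<mu>) \<partial>sb)" .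
  qed
  also have "\<dots> = (\<integral>\<^sup>+a. ennreal (psi \<mu> (s*a)) * ennreal (1/m) * ennreal (laplace_st \<mu> s) \<partial>\<rho>)"
  proof (rule nn_integral_cong_AE)
    show "AE a in \<rho>. (\<integral>\<^sup>+y. (\<integral>\<^sup>+x. ennreal (exp (- (s*a) * y)) * ennreal (exp (- s * x)) \<partial>\<mu>) \<partial>sb)
        = ennreal (psi \<mu> (s*a)) * ennreal (1/m) * ennreal (laplace_st \<mu> s)"
      using A_pos proof eventually_elim
      fix a :: real assume a: "0 < a"
      have "(\<integral>\<^sup>+y. (\<integral>\<^sup>+x. ennreal (exp (- (s*a) * y)) * ennreal (exp (- s * x)) \<partial>\<mu>) \<partial>sb)
          = (\<integral>\<^sup>+y. ennreal (exp (- (s*a) * y)) * ennreal (laplace_st \<mu> s) \<partial>sb)"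
        by (intro nn_integral_cong) (use phi_nn_integral[OF s] in \<open>simp add: nn_integral_cmult meas_cong\<close>)
      also have "\<dots> = (\<integral>\<^sup>+y. ennreal (exp (- (s*a) * y)) \<partial>sb) * ennreal (laplace_st \<mu> s)"
        by (rule nn_integral_multc) (auto simp: measurable_cong_sets[OF sbsets refl])
      also have "\<dots> = ennreal (psi \<mu> (s*a)) * ennreal (1/m) * ennreal (laplace_st \<mu> s)"
        using sbint[of "s*a"] s a by simp
      finally show "(\<integral>\<^sup>+y. (\<integral>\<^sup>+x. ennreal (exp (- (s*a) * y)) * ennreal (exp (- s * x)) \<partial>\<mu>) \<partial>sb)
          = ennreal (psi \<mu> (s*a)) * ennreal (1/m) * ennreal (laplace_st \<mu> s)" .
    qed
  qed
  also have "\<dots> = (\<integral>\<^sup>+a. ennreal (psi \<mu> (s*a)) \<partial>\<rho>) * (ennreal (1/m) * ennreal (laplace_st \<mu> s))"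
    unfolding mult.assoc
    by (rule nn_integral_multc) (auto simp: measurable_cong_sets[OF rho_sets refl])
  finally have X: "ennreal (psi \<mu> s) * ennreal (1/m) = (\<integral>\<^sup>+a. ennreal (psi \<mu> (s*a)) \<partial>\<rho>) * (ennreal (1/m) * ennreal (laplace_st \<mu> s))"
    using sbint[OF s] by simp
  have one: "ennreal (1/m) * ennreal m = 1" using m0 by (simp add: ennreal_mult[symmetric])
  have "ennreal (psi \<mu> s) = ennreal (psi \<mu> s) * (ennreal (1/m) * ennreal m)" using one by simp
  also have "\<dots> = (ennreal (psi \<mu> s) * ennreal (1/m)) * ennreal m" by (simp add: mult.assoc)
  also have "\<dots> = (\<integral>\<^sup>+a. ennreal (psi \<mu> (s*a)) \<partial>\<rho>) * (ennreal (1/m) * ennreal (laplace_st \<mu> s)) * ennreal m"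
    by (simp only: X)
  also have "\<dots> = ennreal (laplace_st \<mu> s) * (\<integral>\<^sup>+a. ennreal (psi \<mu> (s*a)) \<partial>\<rho>) * (ennreal (1/m) * ennreal m)"
    by (simp only: ac_simps)
  also have "\<dots> = ennreal (laplace_st \<mu> s) * (\<integral>\<^sup>+a. ennreal (psi \<mu> (s*a)) \<partial>\<rho>)"
    using one by simp
  finally show ?thesis .
qed

end


context lapl begin

lemma phi_int:
  assumes t: "0 \<le> t"
  shows "laplace_st \<mu> t = 1 - integral {0..t} (psi \<mu>)"
proof -
  have c: "continuous_on {0..t} (psi \<mu>)" by (rule continuous_on_subset[OF psi_cont]) auto
  have hi: "(psi \<mu> has_integral integral {0..t} (psi \<mu>)) {0..t}"
    using integrable_continuous_real[OF c] by (simp add: has_integral_integral)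
  have "ennreal (1 - laplace_st \<mu> t) = ennreal ((1 - laplace_st \<mu> (t*1)) / 1)" by simp
  also have "\<dots> = (\<integral>\<^sup>+\<tau>. ennreal (psi \<mu> (\<tau>*1)) * indicator {0..t} \<tau> \<partial>lborel)"
    by (rule E2) (use t in auto)
  also have "\<dots> = ennreal (integral {0..t} (psi \<mu>))"
    using nn_integral_has_integral_lebesgue'[OF _ hi] psi_nn by simp
  finally have "ennreal (1 - laplace_st \<mu> t) = ennreal (integral {0..t} (psi \<mu>))" .
  moreover have "0 \<le> 1 - laplace_st \<mu> t" using phi_le1[OF t] by simp
  moreover have "0 \<le> integral {0..t} (psi \<mu>)"
    by (rule integral_nonneg[OF integrable_continuous_real[OF c]]) (auto intro: psi_nn)
  ultimately show ?thesis by simp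
qed

lemma phi_deriv:
  assumes s: "0 \<le> s" and t: "t \<in> {0..s}"
  shows "(laplace_st \<mu> has_real_derivative - psi \<mu> t) (at t within {0..s})"
proof -
  have c: "continuous_on {0..s} (psi \<mu>)" by (rule continuous_on_subset[OF psi_cont]) auto
  have "((\<lambda>u. integral {0..u} (psi \<mu>)) has_vector_derivative psi \<mu> t) (at t within {0..s})"
    by (rule integral_has_vector_derivative[OF c t])
  then have "((\<lambda>u. 1 - integral {0..u} (psi \<mu>)) has_real_derivative - psi \<mu> t) (at t within {0..s})"
    by (auto intro!: derivative_eq_intros simp: has_real_derivative_iff_has_vector_derivative[symmetric])
  then show ?thesis
    by (rule has_field_derivative_transform_within[where d=1]) (use t in \<open>auto simp: phi_int\<close>)
qed

lemma E4:
  assumes s: "0 \<le> s"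
  shows "(\<integral>\<^sup>+t. ennreal (psi \<mu> t / laplace_st \<mu> t) * indicator {0..s} t \<partial>lborel) = ennreal (- ln (laplace_st \<mu> s))"
proof -
  let ?F = "\<lambda>t. - ln (laplace_st \<mu> t)"
  have "((\<lambda>t. psi \<mu> t / laplace_st \<mu> t) has_integral (?F s - ?F 0)) {0..s}"
  proof (rule fundamental_theorem_of_calculus[OF s])
    fix t assume t: "t \<in> {0..s}"
    have pos: "0 < laplace_st \<mu> t" using t by (auto intro: phi_pos)
    have "((\<lambda>t. ln (laplace_st \<mu> t)) has_real_derivative inverse (laplace_st \<mu> t) * (- psi \<mu> t)) (at t within {0..s})"
      by (rule DERIV_chain2[OF DERIV_ln[OF pos] phi_deriv[OF s t]])
    then have "(?F has_real_derivative - (inverse (laplace_st \<mu> t) * (- psi \<mu> t))) (at t within {0..s})"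
      by (rule DERIV_minus)
    then have "(?F has_real_derivative psi \<mu> t / laplace_st \<mu> t) (at t within {0..s})"
      by (simp add: divide_inverse mult.commute)
    then show "(?F has_vector_derivative psi \<mu> t / laplace_st \<mu> t) (at t within {0..s})"
      by (simp add: has_real_derivative_iff_has_vector_derivative)
  qed
  then have "(\<integral>\<^sup>+t. ennreal (psi \<mu> t / laplace_st \<mu> t) * indicator {0..s} t \<partial>lborel) = ennreal (?F s - ?F 0)"
    by (rule nn_integral_has_integral_lebesgue'[rotated]) (auto intro!: divide_nonneg_nonneg psi_nn less_imp_le[OF phi_pos])
  then show ?thesis by (simp add: phi0)
qed

end


context lapl begin

interpretation P: prob_space \<mu> by (rule mu_prob)

lemma E3:
  fixes \<rho> :: "real measure"
  assumes rho_prob: "prob_space \<rho>" and rho_sets: "sets \<rho> = sets borel"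
    and A_pos: "AE a in \<rho>. 0 < a"
    and eq: "distr (\<rho> \<Otimes>\<^sub>M (size_biased \<mu> \<Otimes>\<^sub>M \<mu>)) borel (\<lambda>(a, y, x). a * y + x) = size_biased \<mu>"
    and m: "0 < (\<integral>x. x \<partial>\<mu>)"
    and s: "0 \<le> s"
  shows "(\<integral>\<^sup>+a. ennreal ((1 - laplace_st \<mu> (s*a)) / a) \<partial>\<rho>) = ennreal (- ln (laplace_st \<mu> s))"
proof -
  interpret R: prob_space \<rho> by (rule rho_prob)
  interpret Q: pair_sigma_finite lborel \<rho>
    by (simp add: pair_sigma_finite_def R.sigma_finite_measure_axioms lborel.sigma_finite_measure_axioms)
  have sp: "sets (lborel \<Otimes>\<^sub>M \<rho>) = sets (borel \<Otimes>\<^sub>M borel)"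
    by (rule sets_pair_measure_cong) (auto simp: rho_sets)
  have "(\<integral>\<^sup>+a. ennreal ((1 - laplace_st \<mu> (s*a)) / a) \<partial>\<rho>)
      = (\<integral>\<^sup>+a. (\<integral>\<^sup>+t. ennreal (psi \<mu> (t*a)) * indicator {0..s} t \<partial>lborel) \<partial>\<rho>)"
    apply (rule nn_integral_cong_AE)
    using A_pos by eventually_elim (rule E2[OF _ s])
  also have "\<dots> = (\<integral>\<^sup>+t. (\<integral>\<^sup>+a. ennreal (psi \<mu> (t*a)) * indicator {0..s} t \<partial>\<rho>) \<partial>lborel)"
    by (rule Q.Fubini') (simp add: measurable_cong_sets[OF sp refl])
  also have "\<dots> = (\<integral>\<^sup>+t. ennreal (psi \<mu> t / laplace_st \<mu> t) * indicator {0..s} t \<partial>lborel)"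
  proof (intro nn_integral_cong)
    fix t :: real
    show "(\<integral>\<^sup>+a. ennreal (psi \<mu> (t*a)) * indicator {0..s} t \<partial>\<rho>) = ennreal (psi \<mu> t / laplace_st \<mu> t) * indicator {0..s} t"
    proof (cases "t \<in> {0..s}")
      case True
      then have t: "0 \<le> t" by auto
      have pos: "0 < laplace_st \<mu> t" by (rule phi_pos[OF t])
      have e1: "ennreal (psi \<mu> t) = ennreal (laplace_st \<mu> t) * (\<integral>\<^sup>+a. ennreal (psi \<mu> (t*a)) \<partial>\<rho>)"
        by (rule E1[OF rho_prob rho_sets A_pos eq m t])
      have "ennreal (psi \<mu> t / laplace_st \<mu> t) = ennreal (1 / laplace_st \<mu> t) * ennreal (psi \<mu> t)"
        using pos psi_nn[OF t] by (simp add: ennreal_mult[symmetric])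
      also have "\<dots> = (ennreal (1 / laplace_st \<mu> t) * ennreal (laplace_st \<mu> t)) * (\<integral>\<^sup>+a. ennreal (psi \<mu> (t*a)) \<partial>\<rho>)"
        by (simp add: e1 mult.assoc)
      also have "ennreal (1 / laplace_st \<mu> t) * ennreal (laplace_st \<mu> t) = 1"
        using pos by (simp add: ennreal_mult[symmetric])
      finally have "ennreal (psi \<mu> t / laplace_st \<mu> t) = (\<integral>\<^sup>+a. ennreal (psi \<mu> (t*a)) \<partial>\<rho>)" by simp
      then show ?thesis using True
        by (simp add: nn_integral_multc measurable_cong_sets[OF rho_sets refl])
    qed simp
  qed
  also have "\<dots> = ennreal (- ln (laplace_st \<mu> s))" by (rule E4[OF s])
  finally show ?thesis .
qed

end


lemma max_mult_aux: "0 \<le> (c::real) \<Longrightarrow> max 0 (c * x) = max 0 x * c"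
proof (cases "0 \<le> x")
  case True
  assume "0 \<le> c" then show ?thesis using True by (simp add: mult_nonneg_nonneg max_def mult.commute)
next
  case False
  assume "0 \<le> c" then have "c * x \<le> 0" using False by (simp add: mult_nonneg_nonpos)
  then show ?thesis using False by (simp add: max_def)
qed

lemma meas_lnp: "(\<lambda>a::real. ennreal (max 0 (ln a))) \<in> borel_measurable borel"
  by measurable

lemma meas_lnn: "(\<lambda>a::real. ennreal (max 0 (- ln a))) \<in> borel_measurable borel"
  by measurable

theorem proposition2p1:
  fixes \<rho> \<mu> :: "real measure" and h :: "real \<Rightarrow> real"
  assumes rho_prob: "prob_space \<rho>" and rho_sets: "sets \<rho> = sets borel"
    and A_pos: "AE a in \<rho>. 0 < a"
    and Elog_neg: "(\<integral>\<^sup>+ a. ennreal (max 0 (ln a)) \<partial>\<rho>) < (\<integral>\<^sup>+ a. ennreal (max 0 (- ln a)) \<partial>\<rho>)"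
    and mu_sol: "solves_eq2 \<rho> \<mu>"
    and h_nonneg: "\<And>u. 0 < u \<Longrightarrow> 0 \<le> h u"
    and h_mono: "\<And>u v. 0 < u \<Longrightarrow> u \<le> v \<Longrightarrow> h v \<le> h u"
    and h_rcont: "\<And>u. 0 < u \<Longrightarrow> continuous (at_right u) h"
    and h_rho: "\<And>B. B \<in> sets borel \<Longrightarrow> B \<subseteq> {0<..} \<Longrightarrow>
        (\<integral>\<^sup>+ u. ennreal (indicator B (h u) * h u) * indicator {0<..} u \<partial>lborel) = emeasure \<rho> B"
  shows "(\<integral>\<^sup>+ z. ennreal (h z) * indicator {0<..} z \<partial>lborel) = 1
    \<and> (\<integral>\<^sup>+ z. ennreal (max 0 (h z * ln (h z))) * indicator {0<..} z \<partial>lborel)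
           < (\<integral>\<^sup>+ z. ennreal (max 0 (- (h z * ln (h z)))) * indicator {0<..} z \<partial>lborel)
    \<and> shot_noise_fixed_point h 1 \<mu>"
proof -
  have push: "(\<integral>\<^sup>+u. f (h u) * ennreal (h u) * indicator {0<..} u \<partial>lborel) = (\<integral>\<^sup>+a. f a \<partial>\<rho>)"
    if "f \<in> borel_measurable borel" for f
    by (rule push[OF rho_sets A_pos]) (fact | rule h_nonneg h_mono h_rho that; assumption)+
  interpret R: prob_space \<rho> by (rule rho_prob)
  have mu_prob: "prob_space \<mu>" and mu_sets: "sets \<mu> = sets borel" and mu_nn: "AE x in \<mu>. 0 \<le> x"
    and mu_int: "integrable \<mu> (\<lambda>x. x)" and m: "0 < (\<integral>x. x \<partial>\<mu>)"
    and eq: "distr (\<rho> \<Otimes>\<^sub>M (size_biased \<mu> \<Otimes>\<^sub>M \<mu>)) borel (\<lambda>(a, y, x). a * y + x) = size_biased \<mu>"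
    using mu_sol by (auto simp: solves_eq2_def prob_on_nonneg_def has_pos_finite_mean_def)
  interpret L: lapl \<mu> by (simp add: lapl_def mu_prob mu_sets mu_nn mu_int)
  interpret P: prob_space \<mu> by (rule mu_prob)
  have part1: "(\<integral>\<^sup>+ z. ennreal (h z) * indicator {0<..} z \<partial>lborel) = 1"
    using push[of "\<lambda>_. 1"] by (simp add: R.emeasure_space_1)
  have pos_eq: "(\<integral>\<^sup>+ z. ennreal (max 0 (h z * ln (h z))) * indicator {0<..} z \<partial>lborel)
      = (\<integral>\<^sup>+ a. ennreal (max 0 (ln a)) \<partial>\<rho>)"
  proof -
    have "(\<integral>\<^sup>+ z. ennreal (max 0 (h z * ln (h z))) * indicator {0<..} z \<partial>lborel)
        = (\<integral>\<^sup>+ z. ennreal (max 0 (ln (h z))) * ennreal (h z) * indicator {0<..} z \<partial>lborel)"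
    proof (intro nn_integral_cong)
      fix z :: real
      show "ennreal (max 0 (h z * ln (h z))) * indicator {0<..} z = ennreal (max 0 (ln (h z))) * ennreal (h z) * indicator {0<..} z"
      proof (cases "0 < z")
        case True
        then have "0 \<le> h z" by (rule h_nonneg)
        then have "max 0 (h z * ln (h z)) = max 0 (ln (h z)) * h z"
          by (rule max_mult_aux)
        then show ?thesis using \<open>0 \<le> h z\<close>
          by (simp only: ennreal_mult[OF max.cobounded1 \<open>0 \<le> h z\<close>])
      qed simp
    qed
    also have "\<dots> = (\<integral>\<^sup>+ a. ennreal (max 0 (ln a)) \<partial>\<rho>)" by (rule push[OF meas_lnp])
    finally show ?thesis .
  qed
  have neg_eq: "(\<integral>\<^sup>+ z. ennreal (max 0 (- (h z * ln (h z)))) * indicator {0<..} z \<partial>lborel)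
      = (\<integral>\<^sup>+ a. ennreal (max 0 (- ln a)) \<partial>\<rho>)"
  proof -
    have "(\<integral>\<^sup>+ z. ennreal (max 0 (- (h z * ln (h z)))) * indicator {0<..} z \<partial>lborel)
        = (\<integral>\<^sup>+ z. ennreal (max 0 (- ln (h z))) * ennreal (h z) * indicator {0<..} z \<partial>lborel)"
    proof (intro nn_integral_cong)
      fix z :: real
      show "ennreal (max 0 (- (h z * ln (h z)))) * indicator {0<..} z = ennreal (max 0 (- ln (h z))) * ennreal (h z) * indicator {0<..} z"
      proof (cases "0 < z")
        case True
        then have "0 \<le> h z" by (rule h_nonneg)
        then have "max 0 (- (h z * ln (h z))) = max 0 (- ln (h z)) * h z"
          using max_mult_aux[of "h z" "- ln (h z)"] by simp
        then show ?thesis using \<open>0 \<le> h z\<close>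
          by (simp only: ennreal_mult[OF max.cobounded1 \<open>0 \<le> h z\<close>])
      qed simp
    qed
    also have "\<dots> = (\<integral>\<^sup>+ a. ennreal (max 0 (- ln a)) \<partial>\<rho>)" by (rule push[OF meas_lnn])
    finally show ?thesis .
  qed
  define h' where "h' = (\<lambda>u. if 0<u then h u else 0)"
  have hm[measurable]: "h' \<in> borel_measurable borel" unfolding h'_def by (rule h_meas[OF h_mono])
  note L.phi_meas[measurable]
  have inPh: "in_Ph_plus h \<mu>"
    unfolding in_Ph_plus_def prob_on_nonneg_def
  proof (intro conjI)
    show "prob_space \<mu>" "sets \<mu> = sets borel" "AE x in \<mu>. 0 \<le> x" by fact+
    have "(\<integral>\<^sup>+ y. (\<integral>\<^sup>+ s. ennreal (min 1 (h s * y)) * indicator {0<..} s \<partial>lborel) \<partial>\<mu>) \<le> (\<integral>\<^sup>+ y. ennreal y \<partial>\<mu>)"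
    proof (rule nn_integral_mono_AE)
      show "AE y in \<mu>. (\<integral>\<^sup>+ s. ennreal (min 1 (h s * y)) * indicator {0<..} s \<partial>lborel) \<le> ennreal y"
        using mu_nn proof eventually_elim
        fix y :: real assume y: "0 \<le> y"
        have fm: "(\<lambda>a. ennreal (min (1/a) y)) \<in> borel_measurable borel" by measurable
        have "(\<integral>\<^sup>+ s. ennreal (min 1 (h s * y)) * indicator {0<..} s \<partial>lborel)
            = (\<integral>\<^sup>+ s. ennreal (min (1 / h s) y) * ennreal (h s) * indicator {0<..} s \<partial>lborel)"
        proof (intro nn_integral_cong)
          fix u :: real
          show "ennreal (min 1 (h u * y)) * indicator {0<..} u = ennreal (min (1 / h u) y) * ennreal (h u) * indicator {0<..} u"
          proof (cases "0 < u")
            case True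
            then have hu: "0 \<le> h u" by (rule h_nonneg)
            show ?thesis
            proof (cases "h u = 0")
              case False
              then have hp: "0 < h u" using hu by simp
              have "min 1 (h u * y) = min (1 / h u) y * h u"
                using hp by (simp add: min_def field_simps)
              then show ?thesis using hp y by (simp add: ennreal_mult[symmetric])
            qed simp
          qed simp
        qed
        also have "\<dots> = (\<integral>\<^sup>+ a. ennreal (min (1/a) y) \<partial>\<rho>)" by (rule push[OF fm])
        also have "\<dots> \<le> (\<integral>\<^sup>+ a. ennreal y \<partial>\<rho>)" by (rule nn_integral_mono) (simp add: ennreal_leI)
        also have "\<dots> = ennreal y" by (simp add: R.emeasure_space_1)
        finally show "(\<integral>\<^sup>+ s. ennreal (min 1 (h s * y)) * indicator {0<..} s \<partial>lborel) \<le> ennreal y" .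
      qed
    qed
    also have "(\<integral>\<^sup>+ y. ennreal y \<partial>\<mu>) = ennreal (\<integral>y. y \<partial>\<mu>)"
      by (rule nn_integral_eq_integral[OF mu_int mu_nn])
    finally show "(\<integral>\<^sup>+ y. (\<integral>\<^sup>+ s. ennreal (min 1 (h s * y)) * indicator {0<..} s \<partial>lborel) \<partial>\<mu>) < \<infinity>"
      using le_less_trans by fastforce
  qed
  have notdelta: "\<mu> \<noteq> return borel 0"
  proof
    assume "\<mu> = return borel 0"
    then have "(\<integral>x. x \<partial>\<mu>) = 0" by (simp add: integral_return)
    then show False using m by simp
  qed
  have main: "set_integrable lborel {0<..} (\<lambda>u. laplace_st \<mu> (s * h u) - 1) \<and>
        laplace_st \<mu> s = exp (1 * (\<integral>u\<in>{0<..}. (laplace_st \<mu> (s * h u) - 1) \<partial>lborel))"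
    if s: "0 \<le> s" for s
  proof -
    have fm: "(\<lambda>a. ennreal ((1 - laplace_st \<mu> (s*a)) / a)) \<in> borel_measurable borel" by measurable
    have G: "(\<integral>\<^sup>+u. ennreal (1 - laplace_st \<mu> (s * h u)) * indicator {0<..} u \<partial>lborel) = ennreal (- ln (laplace_st \<mu> s))"
    proof -
      have "(\<integral>\<^sup>+u. ennreal (1 - laplace_st \<mu> (s * h u)) * indicator {0<..} u \<partial>lborel)
          = (\<integral>\<^sup>+u. ennreal ((1 - laplace_st \<mu> (s * h u)) / h u) * ennreal (h u) * indicator {0<..} u \<partial>lborel)"
      proof (intro nn_integral_cong)
        fix u :: real
        show "ennreal (1 - laplace_st \<mu> (s * h u)) * indicator {0<..} u = ennreal ((1 - laplace_st \<mu> (s * h u)) / h u) * ennreal (h u) * indicator {0<..} u"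
        proof (cases "0 < u")
          case True
          then have hu: "0 \<le> h u" by (rule h_nonneg)
          show ?thesis
          proof (cases "h u = 0")
            case False
            then have hp: "0 < h u" using hu by simp
            have le1: "laplace_st \<mu> (s * h u) \<le> 1" using s hu by (intro L.phi_le1) simp
            then show ?thesis using hp
              by (simp add: ennreal_mult[symmetric])
          qed (simp add: L.phi0)
        qed simp
      qed
      also have "\<dots> = (\<integral>\<^sup>+a. ennreal ((1 - laplace_st \<mu> (s*a)) / a) \<partial>\<rho>)" by (rule push[OF fm])
      also have "\<dots> = ennreal (- ln (laplace_st \<mu> s))" by (rule L.E3[OF rho_prob rho_sets A_pos eq m s])
      finally show ?thesis .
    qed
    let ?g = "\<lambda>u. indicator {0<..} u * (1 - laplace_st \<mu> (s * h' u))"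
    have eqf: "(\<lambda>u. indicator {0<..} u *\<^sub>R (laplace_st \<mu> (s * h u) - 1)) = (\<lambda>u. - ?g u)"
      by (auto simp: h'_def indicator_def fun_eq_iff)
    have gm: "?g \<in> borel_measurable borel" by measurable
    have gnn: "0 \<le> ?g u" for u
    proof (cases "0 < u")
      case True
      then have "0 \<le> h u" by (rule h_nonneg)
      then have "laplace_st \<mu> (s * h' u) \<le> 1" using s True by (intro L.phi_le1) (simp add: h'_def)
      then show ?thesis by simp
    qed simp
    have gint: "(\<integral>\<^sup>+u. ennreal (?g u) \<partial>lborel) = ennreal (- ln (laplace_st \<mu> s))"
      unfolding G[symmetric]
      by (intro nn_integral_cong) (auto simp: h'_def indicator_def)
    have ig: "integrable lborel ?g"
      by (rule integrableI_nonneg) (use gm gnn gint in auto)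
    have pos: "0 < laplace_st \<mu> s" by (rule L.phi_pos[OF s])
    have le1: "laplace_st \<mu> s \<le> 1" by (rule L.phi_le1[OF s])
    have lnle: "0 \<le> - ln (laplace_st \<mu> s)" using pos le1 by simp
    have "integral\<^sup>L lborel ?g = enn2real (\<integral>\<^sup>+u. ennreal (?g u) \<partial>lborel)"
      by (rule integral_eq_nn_integral) (use gm gnn in auto)
    also have "\<dots> = - ln (laplace_st \<mu> s)" using gint lnle by simp
    finally have gval: "integral\<^sup>L lborel ?g = - ln (laplace_st \<mu> s)" .
    have si: "set_integrable lborel {0<..} (\<lambda>u. laplace_st \<mu> (s * h u) - 1)"
      unfolding set_integrable_def eqf using ig by simp
    have "(\<integral>u\<in>{0<..}. (laplace_st \<mu> (s * h u) - 1) \<partial>lborel) = ln (laplace_st \<mu> s)"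
      unfolding set_lebesgue_integral_def eqf by (simp add: gval)
    then show ?thesis using si pos by simp
  qed
  have part3: "shot_noise_fixed_point h 1 \<mu>"
    unfolding shot_noise_fixed_point_def using inPh notdelta main by blast
  show ?thesis using part1 pos_eq neg_eq Elog_neg part3 by simp
qed


end
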